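(* Let $r\ge 2$, $t\ge 1$, and let $\mathcal F\subset 2^{[n]}$ be a non-trivial $r$-wise $t$-agreeing family. For $j\in[n]$ let $\mathcal F_j=\{F\setminus\{j\}: F\in\mathcal F\}$, regarded as a subfamily of $2^{[n]\setminus\{j\}}$ (with ground set $[n]\setminus\{j\}$). If $t\ge 2$ then $\mathcal F_j$ is non-trivial $r$-wise $(t-1)$-agreeing. If $t=1$ then $\mathcal F_j$ is non-trivial $(r-1)$-wise agreeing (i.e. $(r-1)$-wise $1$-agreeing).
   Context: For a ground set $X$ and a family $\mathcal F\subset 2^X$: sets $F_1,\ldots,F_r\subset X$ agree on a coordinate $x\in X$ if either $x\in\bigcap_{i}F_i$ or $x\notin\bigcup_i F_i$. $\mathcal F$ is $r$-wise $t$-agreeing if any $r$ sets from $\mathcal F$ (not necessarily distinct) agree on at least $t$ coordinates of $X$; $r$-wise agreeing means $r$-wise $1$-agreeing. $\mathcal F$ is non-trivial if $\bigcap_{A\in\mathcal F}A=\emptyset$ and $\bigcup_{A\in\mathcal F}A=X$. Here $X=[n]$ for $\mathcal F$ and $X=[n]\setminus\{j\}$ for $\mathcal F_j$. *)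

theory Defs
  imports Main
begin

definition agree_on :: "nat \<Rightarrow> (nat \<Rightarrow> 'a set) \<Rightarrow> 'a \<Rightarrow> bool" where
  "agree_on r G x \<longleftrightarrow> (\<forall>i<r. x \<in> G i) \<or> (\<forall>i<r. x \<notin> G i)"

text \<open>r-wise t-agreeing over ground set X: any r (not necessarily distinct)
  members of F agree on at least t coordinates of X.\<close>
definition r_wise_t_agreeing :: "'a set \<Rightarrow> 'a set set \<Rightarrow> nat \<Rightarrow> nat \<Rightarrow> bool" where
  "r_wise_t_agreeing X F r t \<longleftrightarrow>
     (\<forall>G. (\<forall>i<r. G i \<in> F) \<longrightarrow> t \<le> card {x \<in> X. agree_on r G x})"

definition non_trivial :: "'a set \<Rightarrow> 'a set set \<Rightarrow> bool" where
  "non_trivial X F \<longleftrightarrow> \<Inter> F = {} \<and> \<Union> F = X"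

end

theory Submission
  imports Defs
begin

lemma pick_H:
  assumes "\<forall>i<r. G i \<in> (\<lambda>A. A - {j}) ` F"
  obtains H where "\<forall>i<r. H i \<in> F \<and> G i = H i - {j}"
proof -
  define H where "H i = (SOME A. A \<in> F \<and> G i = A - {j})" for i
  have "\<forall>i<r. H i \<in> F \<and> G i = H i - {j}"
  proof (intro allI impI)
    fix i assume "i < r"
    then have "\<exists>A. A \<in> F \<and> G i = A - {j}" using assms by blast
    then show "H i \<in> F \<and> G i = H i - {j}" unfolding H_def by (rule someI_ex)
  qed
  then show ?thesis using that by blast
qed

lemma rwD:
  assumes "r_wise_t_agreeing X F r t" "\<forall>i<r. G i \<in> F"
  shows "t \<le> card {x \<in> X. agree_on r G x}"
  using assms unfolding r_wise_t_agreeing_def by blast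

lemma agree_ne:
  assumes "\<forall>i<r. G i = H i - {j}" "x \<noteq> j"
  shows "agree_on r G x \<longleftrightarrow> agree_on r H x"
  using assms unfolding agree_on_def by auto

lemma nontriv:
  assumes "non_trivial {1..n} F" "F \<subseteq> Pow {1..n}"
  shows "non_trivial ({1..n} - {j}) ((\<lambda>A. A - {j}) ` F)"
proof -
  have ne: "F \<noteq> {}" using assms(1) unfolding non_trivial_def by auto
  have "\<Inter> ((\<lambda>A. A - {j}) ` F) = \<Inter> F - {j}" using ne by auto
  moreover have "\<Union> ((\<lambda>A. A - {j}) ` F) = \<Union> F - {j}" by auto
  ultimately show ?thesis using assms(1) unfolding non_trivial_def by auto
qed

theorem lemma2:
  fixes n r t j :: nat and F :: "nat set set"
  assumes "r \<ge> 2" and "t \<ge> 1"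
    and "F \<subseteq> Pow {1..n}"
    and "non_trivial {1..n} F"
    and "r_wise_t_agreeing {1..n} F r t"
    and "j \<in> {1..n}"
  shows "(t \<ge> 2 \<longrightarrow>
            non_trivial ({1..n} - {j}) ((\<lambda>A. A - {j}) ` F) \<and>
            r_wise_t_agreeing ({1..n} - {j}) ((\<lambda>A. A - {j}) ` F) r (t - 1))
       \<and> (t = 1 \<longrightarrow>
            non_trivial ({1..n} - {j}) ((\<lambda>A. A - {j}) ` F) \<and>
            r_wise_t_agreeing ({1..n} - {j}) ((\<lambda>A. A - {j}) ` F) (r - 1) 1)"
proof -
  have NT: "non_trivial ({1..n} - {j}) ((\<lambda>A. A - {j}) ` F)"
    using nontriv assms(3,4) by blast
  have P1: "r_wise_t_agreeing ({1..n} - {j}) ((\<lambda>A. A - {j}) ` F) r (t - 1)"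
    unfolding r_wise_t_agreeing_def
  proof (intro allI impI)
    fix G assume "\<forall>i<r. G i \<in> (\<lambda>A. A - {j}) ` F"
    then obtain H where H: "\<forall>i<r. H i \<in> F \<and> G i = H i - {j}" by (rule pick_H)
    have t: "t \<le> card {x \<in> {1..n}. agree_on r H x}"
      using rwD[OF assms(5)] H by blast
    have GH: "\<forall>i<r. G i = H i - {j}" using H by blast
    have sub: "{x \<in> {1..n}. agree_on r H x} - {j} \<subseteq> {x \<in> {1..n} - {j}. agree_on r G x}"
    proof
      fix x assume x: "x \<in> {x \<in> {1..n}. agree_on r H x} - {j}"
      then have "x \<noteq> j" by blast
      with x show "x \<in> {x \<in> {1..n} - {j}. agree_on r G x}"
        using agree_ne[OF GH, of x] by blast
    qed
    have fin: "finite {x \<in> {1..n} - {j}. agree_on r G x}" by simp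
    have "card ({x \<in> {1..n}. agree_on r H x} - {j}) \<le> card {x \<in> {1..n} - {j}. agree_on r G x}"
      by (rule card_mono[OF fin sub])
    moreover have "card {x \<in> {1..n}. agree_on r H x} - card {j} \<le> card ({x \<in> {1..n}. agree_on r H x} - {j})"
      by (rule diff_card_le_card_Diff) simp
    then have "card {x \<in> {1..n}. agree_on r H x} - 1 \<le> card ({x \<in> {1..n}. agree_on r H x} - {j})"
      by simp
    ultimately show "t - 1 \<le> card {x \<in> {1..n} - {j}. agree_on r G x}" using t by linarith
  qed
  have P2: "r_wise_t_agreeing ({1..n} - {j}) ((\<lambda>A. A - {j}) ` F) (r - 1) 1" if "t = 1"
    unfolding r_wise_t_agreeing_def
  proof (intro allI impI)
    fix G assume "\<forall>i<r - 1. G i \<in> (\<lambda>A. A - {j}) ` F"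
    then obtain H where H: "\<forall>i<r - 1. H i \<in> F \<and> G i = H i - {j}" by (rule pick_H)
    have GH: "\<forall>i<r - 1. G i = H i - {j}" using H by blast
    obtain A where A: "A \<in> F" "j \<notin> A" using assms(4) unfolding non_trivial_def by blast
    obtain B where B: "B \<in> F" "j \<in> B" using assms(4,6) unfolding non_trivial_def by blast
    have r1: "r - 1 < r" "0 < r - 1" using assms(1) by auto
    define K where "K C = (\<lambda>i. if i < r - 1 then H i else C)" for C
    have K0: "K C 0 = H 0" for C using r1 by (simp add: K_def)
    have Klast: "K C (r - 1) = C" for C by (simp add: K_def)
    have key: "\<exists>x\<in>{1..n}. agree_on r (K C) x" if "C \<in> F" for C
    proof -
      have inF: "\<forall>i<r. K C i \<in> F" using H that by (simp add: K_def)
      have "1 \<le> card {x \<in> {1..n}. agree_on r (K C) x}"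
        using rwD[OF assms(5) inF] \<open>t = 1\<close> by simp
      then have "{x \<in> {1..n}. agree_on r (K C) x} \<noteq> {}"
        by (metis card.empty not_one_le_zero)
      then show ?thesis by blast
    qed
    have red: "agree_on (r - 1) G x" if xj: "x \<noteq> j" and ag: "agree_on r (K C) x" for x C
    proof -
      have eq: "x \<in> G i \<longleftrightarrow> x \<in> K C i" if "i < r - 1" for i
        using GH that xj by (simp add: K_def)
      from ag consider "\<forall>i<r. x \<in> K C i" | "\<forall>i<r. x \<notin> K C i"
        unfolding agree_on_def by blast
      then show ?thesis
      proof cases
        case 1 then show ?thesis unfolding agree_on_def using eq by simp
      next
        case 2 then show ?thesis unfolding agree_on_def using eq by simp
      qed
    qed
    obtain xa where xa: "xa \<in> {1..n}" "agree_on r (K A) xa"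
      using key A by blast
    obtain xb where xb: "xb \<in> {1..n}" "agree_on r (K B) xb"
      using key B by blast
    have "\<exists>x\<in>{1..n} - {j}. agree_on (r - 1) G x"
    proof (cases "xa = j")
      case False then show ?thesis using red xa by blast
    next
      case True
      have "\<not> (\<forall>i<r. j \<in> K A i)" using r1(1) Klast A(2) by metis
      then have "\<forall>i<r. j \<notin> K A i" using xa(2) True unfolding agree_on_def by blast
      then have "j \<notin> H 0" using K0 r1 by (metis less_trans)
      have "xb \<noteq> j"
      proof
        assume "xb = j"
        have "\<not> (\<forall>i<r. j \<notin> K B i)" using r1(1) Klast B(2) by metis
        then have "\<forall>i<r. j \<in> K B i" using xb(2) \<open>xb = j\<close> unfolding agree_on_def by blast
        then have "j \<in> H 0" using K0 r1 by (metis less_trans)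
        with \<open>j \<notin> H 0\<close> show False by simp
      qed
      then show ?thesis using red xb by blast
    qed
    then have "{x \<in> {1..n} - {j}. agree_on (r - 1) G x} \<noteq> {}" by blast
    moreover have "finite {x \<in> {1..n} - {j}. agree_on (r - 1) G x}" by simp
    ultimately show "1 \<le> card {x \<in> {1..n} - {j}. agree_on (r - 1) G x}"
      by (simp add: Suc_leI card_gt_0_iff)
  qed
  show ?thesis using NT P1 P2 by auto
qed

end
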